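(* Let $N\ge1$, $n_1,\dots,n_N\ge1$, $n=\sum_\nu n_\nu$, $m\ge1$. For $\nu=1,\dots,N$ let $Q_\nu\in\mathbb{R}^{n_\nu\times n_\nu}$ be symmetric positive definite, $c_\nu\in\mathbb{R}^{n_\nu}$, and let $X_\nu\subseteq\mathbb{R}^{n_\nu}$ be nonempty with $X=X_1\times\dots\times X_N$ convex and compact. Let $a\in\mathbb{R}^m$ with $a\ge0$ componentwise, $Q_y\in\mathbb{R}^{m\times m}$ positive definite and diagonal, and let $b,l:\mathbb{R}^n\to\mathbb{R}^m$ be differentiable and componentwise convex on $X$. Consider the Nash equilibrium problem (NEP) in which player $\nu$ solves $$\min_{x_\nu}\ \tfrac12 x_\nu^\top Q_\nu x_\nu+c_\nu^\top x_\nu+\sum_{i=1}^m a_i\max\{(Q_y^{-1}b(x))_i,\,l_i(x)\}\quad\text{s.t. } x_\nu\in X_\nu,$$ with $x=(x_\nu,x_{-\nu})$. Then this NEP has at least one Nash equilibrium. Consequently, the multi-leader-follower game described in the context has at least one Nash equilibrium.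
   Context: Notation: $x=(x_1,\dots,x_N)\in\mathbb{R}^n$ with $x_\nu\in\mathbb{R}^{n_\nu}$, and $x_{-\nu}$ denotes the vector of all $x_i$, $i\ne\nu$. The multi-leader-follower game (MLFG): given the leaders' strategies $x$, the follower solves $\min_{y\in\mathbb{R}^m}\tfrac12 y^\top Q_y y-b(x)^\top y$ s.t. $y\ge l(x)$; its unique solution (best response) is $y(x)=\max\{Q_y^{-1}b(x),l(x)\}$ (componentwise). Leader $\nu$ solves $\min_{x_\nu\in X_\nu}\theta_\nu(x_\nu,x_{-\nu})=\tfrac12 x_\nu^\top Q_\nu x_\nu+c_\nu^\top x_\nu+a^\top y(x)$. A Nash equilibrium (of the NEP or the MLFG) is a point $x^*\in X$ such that for every $\nu$, $x^*_\nu$ minimizes player $\nu$'s objective over $X_\nu$ with $x_{-\nu}=x^*_{-\nu}$ fixed. *)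

theory Defs
  imports "HOL-Analysis.Analysis"
begin

text \<open>The coordinates are partitioned among the players 'p by owner :: 'n \<Rightarrow> 'p;
  block nu = {i. owner i = nu} has size n_nu.  A strategy of player nu (an element of
  R^{n_nu}) is represented as a function 'n \<Rightarrow> real vanishing outside block nu.\<close>

definition block :: "('n \<Rightarrow> 'p) \<Rightarrow> 'p \<Rightarrow> 'n set" where
  "block owner nu = {i. owner i = nu}"

definition blockvec :: "('n::finite \<Rightarrow> 'p) \<Rightarrow> 'p \<Rightarrow> real^'n \<Rightarrow> ('n \<Rightarrow> real)" where
  "blockvec owner nu x = (\<lambda>i. if owner i = nu then x $ i else 0)"

definition replace_block :: "('n::finite \<Rightarrow> 'p) \<Rightarrow> 'p \<Rightarrow> ('n \<Rightarrow> real) \<Rightarrow> real^'n \<Rightarrow> real^'n" where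
  "replace_block owner nu z x = (\<chi> i. if owner i = nu then z i else x $ i)"

definition prod_set :: "('n::finite \<Rightarrow> 'p) \<Rightarrow> ('p \<Rightarrow> ('n \<Rightarrow> real) set) \<Rightarrow> (real^'n) set" where
  "prod_set owner Xs = {x. \<forall>nu. blockvec owner nu x \<in> Xs nu}"

definition is_nash_eq :: "('n::finite \<Rightarrow> 'p) \<Rightarrow> ('p \<Rightarrow> ('n \<Rightarrow> real) set)
    \<Rightarrow> ('p \<Rightarrow> real^'n \<Rightarrow> real) \<Rightarrow> real^'n \<Rightarrow> bool" where
  "is_nash_eq owner Xs theta x \<longleftrightarrow> x \<in> prod_set owner Xs \<and>
     (\<forall>nu. \<forall>z \<in> Xs nu. theta nu x \<le> theta nu (replace_block owner nu z x))"

definition leader_quad :: "('n::finite \<Rightarrow> 'p) \<Rightarrow> ('p \<Rightarrow> 'n \<Rightarrow> 'n \<Rightarrow> real) \<Rightarrow> ('p \<Rightarrow> 'n \<Rightarrow> real)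
    \<Rightarrow> 'p \<Rightarrow> real^'n \<Rightarrow> real" where
  "leader_quad owner Q c nu x =
     (1/2) * (\<Sum>i\<in>block owner nu. \<Sum>j\<in>block owner nu. x $ i * Q nu i j * x $ j)
     + (\<Sum>i\<in>block owner nu. c nu i * x $ i)"

definition nep_obj :: "('n::finite \<Rightarrow> 'p) \<Rightarrow> ('p \<Rightarrow> 'n \<Rightarrow> 'n \<Rightarrow> real) \<Rightarrow> ('p \<Rightarrow> 'n \<Rightarrow> real)
    \<Rightarrow> real^'m::finite \<Rightarrow> real^'m^'m \<Rightarrow> (real^'n \<Rightarrow> real^'m) \<Rightarrow> (real^'n \<Rightarrow> real^'m)
    \<Rightarrow> 'p \<Rightarrow> real^'n \<Rightarrow> real" where
  "nep_obj owner Q c a Qy b l nu x = leader_quad owner Q c nu x +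
     (\<Sum>i\<in>UNIV. a $ i * max ((matrix_inv Qy *v b x) $ i) (l x $ i))"

definition follower_obj :: "real^'m^'m \<Rightarrow> real^'m \<Rightarrow> real^'m::finite \<Rightarrow> real" where
  "follower_obj Qy bx y = (1/2) * (y \<bullet> (Qy *v y)) - bx \<bullet> y"

definition follower_resp :: "real^'m^'m \<Rightarrow> (real^'n \<Rightarrow> real^'m) \<Rightarrow> (real^'n \<Rightarrow> real^'m)
    \<Rightarrow> real^'n \<Rightarrow> real^'m::finite" where
  "follower_resp Qy b l x = (THE y. (\<forall>i. l x $ i \<le> y $ i) \<and>
      (\<forall>y'. (\<forall>i. l x $ i \<le> y' $ i) \<longrightarrow> follower_obj Qy (b x) y \<le> follower_obj Qy (b x) y'))"

definition mlfg_obj :: "('n::finite \<Rightarrow> 'p) \<Rightarrow> ('p \<Rightarrow> 'n \<Rightarrow> 'n \<Rightarrow> real) \<Rightarrow> ('p \<Rightarrow> 'n \<Rightarrow> real)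
    \<Rightarrow> real^'m::finite \<Rightarrow> real^'m^'m \<Rightarrow> (real^'n \<Rightarrow> real^'m) \<Rightarrow> (real^'n \<Rightarrow> real^'m)
    \<Rightarrow> 'p \<Rightarrow> real^'n \<Rightarrow> real" where
  "mlfg_obj owner Q c a Qy b l nu x = leader_quad owner Q c nu x + a \<bullet> follower_resp Qy b l x"

end

theory Submission
  imports Defs
begin

lemma diag_inv:
  fixes Qy :: "real^'m::finite^'m"
  assumes Qy_diag: "\<And>i j. i \<noteq> j \<Longrightarrow> Qy $ i $ j = 0"
    and Qy_pos: "\<And>i. Qy $ i $ i > 0"
  shows "(matrix_inv Qy *v v) $ i = v $ i / Qy $ i $ i"
proof -
  define D :: "real^'m^'m" where "D = (\<chi> i j. if i = j then 1 / Qy $ i $ i else 0)"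
  have dsum: "\<And>(f::'m\<Rightarrow>real) i. (\<Sum>k\<in>UNIV. (if k = i then f k else 0)) = f i"
    by (simp add: sum.delta')
  have "\<And>i j. Qy $ i $ k * D $ k $ j = (if k = i then (if i = j then 1 else 0) else 0)" for k
    using Qy_diag Qy_pos by (auto simp: D_def) (metis less_irrefl)
  hence 1: "Qy ** D = mat 1"
    by (simp add: matrix_matrix_mult_def mat_def vec_eq_iff dsum)
  have "\<And>i j. D $ i $ k * Qy $ k $ j = (if k = i then (if i = j then 1 else 0) else 0)" for k
    using Qy_diag Qy_pos by (auto simp: D_def) (metis less_irrefl)
  hence 2: "D ** Qy = mat 1"
    by (simp add: matrix_matrix_mult_def mat_def vec_eq_iff dsum)
  have "Qy ** matrix_inv Qy = mat 1 \<and> matrix_inv Qy ** Qy = mat 1"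
    unfolding matrix_inv_def by (rule someI[of _ D]) (use 1 2 in auto)
  hence "matrix_inv Qy = D"
    by (metis 1 matrix_mul_assoc matrix_mul_lid matrix_mul_rid)
  moreover have "\<And>k. D $ i $ k * v $ k = (if k = i then v $ i / Qy $ i $ i else 0)"
    by (auto simp: D_def)
  ultimately show ?thesis
    by (simp add: matrix_vector_mult_def sum.delta')
qed

lemma scalar_key:
  fixes q y l \<beta> :: real
  assumes "q > 0" "l \<le> y" and m_def: "m = max (\<beta>/q) l"
  shows "(1/2) * q * y^2 - \<beta> * y - ((1/2) * q * m^2 - \<beta> * m)
          \<ge> (1/2) * q * (y - m)^2"
proof -
  have e: "(1/2) * q * y^2 - \<beta> * y - ((1/2) * q * m^2 - \<beta> * m) = (y - m) * (q * m - \<beta>) + (1/2) * q * (y - m)^2"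
    by (simp add: algebra_simps power2_eq_square)
  have "(y - m) * (q * m - \<beta>) \<ge> 0"
  proof (cases "\<beta>/q \<ge> l")
    case True
    then have "m = \<beta>/q" by (simp add: m_def)
    then show ?thesis using assms by simp
  next
    case False
    then have "m = l" "l > \<beta>/q" by (auto simp: m_def)
    then have "q * m - \<beta> > 0" using assms by (simp add: field_simps)
    then show ?thesis using assms \<open>m = l\<close> by simp
  qed
  then show ?thesis unfolding e by (rule add_increasing) simp
qed

lemma follower_resp_eq:
  fixes Qy :: "real^'m::finite^'m"
  assumes Qy_diag: "\<And>i j. i \<noteq> j \<Longrightarrow> Qy $ i $ j = 0"
    and Qy_pos: "\<And>i. Qy $ i $ i > 0"
  shows "follower_resp Qy b l x = (\<chi> i. max (b x $ i / Qy $ i $ i) (l x $ i))"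
proof -
  define m where "m = (\<chi> i. max (b x $ i / Qy $ i $ i) (l x $ i))"
  have mv: "(Qy *v y) $ i = Qy $ i $ i * y $ i" for y i
  proof -
    have "(\<Sum>k\<in>UNIV. Qy $ i $ k * y $ k) = (\<Sum>k\<in>UNIV. if k = i then Qy $ i $ i * y $ i else 0)"
      by (rule sum.cong) (auto simp: Qy_diag)
    then show ?thesis by (simp add: matrix_vector_mult_def)
  qed
  have obj: "follower_obj Qy (b x) y = (\<Sum>i\<in>UNIV. (1/2) * Qy $ i $ i * (y $ i)^2 - b x $ i * y $ i)" for y
    unfolding follower_obj_def inner_vec_def mv
    by (simp add: sum_subtractf sum_distrib_left power2_eq_square mult.commute mult.left_commute)
  have key: "follower_obj Qy (b x) y - follower_obj Qy (b x) m \<ge> (1/2) * Qy $ k $ k * (y $ k - m $ k)^2"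
    if "\<forall>i. l x $ i \<le> y $ i" for y k
  proof -
    have t: "(1/2) * Qy $ i $ i * (y $ i)^2 - b x $ i * y $ i - ((1/2) * Qy $ i $ i * (m $ i)^2 - b x $ i * m $ i)
       \<ge> (1/2) * Qy $ i $ i * (y $ i - m $ i)^2" for i
    proof -
      have "m $ i = max (b x $ i / Qy $ i $ i) (l x $ i)" by (simp add: m_def)
      then show ?thesis by (rule scalar_key[OF Qy_pos that[rule_format]])
    qed
    have "(1/2) * Qy $ k $ k * (y $ k - m $ k)^2 \<le> (\<Sum>i\<in>UNIV. (1/2) * Qy $ i $ i * (y $ i - m $ i)^2)"
      by (rule member_le_sum) (auto simp: less_imp_le[OF Qy_pos])
    also have "\<dots> \<le> (\<Sum>i\<in>UNIV. (1/2) * Qy $ i $ i * (y $ i)^2 - b x $ i * y $ i - ((1/2) * Qy $ i $ i * (m $ i)^2 - b x $ i * m $ i))"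
      by (rule sum_mono) (rule t)
    also have "\<dots> = follower_obj Qy (b x) y - follower_obj Qy (b x) m"
      by (simp add: obj sum_subtractf)
    finally show ?thesis .
  qed
  have mfeas: "\<forall>i. l x $ i \<le> m $ i" by (simp add: m_def)
  have mopt: "\<forall>y'. (\<forall>i. l x $ i \<le> y' $ i) \<longrightarrow> follower_obj Qy (b x) m \<le> follower_obj Qy (b x) y'"
  proof (intro allI impI)
    fix y' assume f: "\<forall>i. l x $ i \<le> y' $ i"
    obtain k :: 'm where True by auto
    have "0 \<le> (1/2) * Qy $ k $ k * (y' $ k - m $ k)^2" using Qy_pos[of k] by simp
    then show "follower_obj Qy (b x) m \<le> follower_obj Qy (b x) y'" using key[OF f, of k] by linarith
  qed
  show ?thesis
    unfolding follower_resp_def m_def[symmetric]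
  proof (rule the_equality)
    show "(\<forall>i. l x $ i \<le> m $ i) \<and> (\<forall>y'. (\<forall>i. l x $ i \<le> y' $ i) \<longrightarrow> follower_obj Qy (b x) m \<le> follower_obj Qy (b x) y')"
      using mfeas mopt by blast
  next
    fix y assume h: "(\<forall>i. l x $ i \<le> y $ i) \<and> (\<forall>y'. (\<forall>i. l x $ i \<le> y' $ i) \<longrightarrow> follower_obj Qy (b x) y \<le> follower_obj Qy (b x) y')"
    have "y $ k = m $ k" for k
    proof -
      have "follower_obj Qy (b x) y \<le> follower_obj Qy (b x) m" using h mfeas by blast
      then have "(1/2) * Qy $ k $ k * (y $ k - m $ k)^2 \<le> 0" using key[of y k, OF conjunct1[OF h]] by linarith
      then have "(y $ k - m $ k)^2 \<le> 0" using Qy_pos[of k]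
        by (simp add: mult_le_0_iff)
      then show ?thesis by simp
    qed
    then show "y = m" by (simp add: vec_eq_iff)
  qed
qed

theorem mainTheorem2:
  fixes owner :: "'n::finite \<Rightarrow> 'p::finite"
    and Q :: "'p \<Rightarrow> 'n \<Rightarrow> 'n \<Rightarrow> real"
    and c :: "'p \<Rightarrow> 'n \<Rightarrow> real"
    and Xs :: "'p \<Rightarrow> ('n \<Rightarrow> real) set"
    and a :: "real^'m::finite"
    and Qy :: "real^'m^'m"
    and b l :: "real^'n \<Rightarrow> real^'m"
  assumes blocks_nonempty: "surj owner"
    and Q_sym: "\<And>nu i j. i \<in> block owner nu \<Longrightarrow> j \<in> block owner nu \<Longrightarrow> Q nu i j = Q nu j i"
    and Q_pd: "\<And>nu v. (\<exists>i \<in> block owner nu. v i \<noteq> 0) \<Longrightarrow>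
                 (\<Sum>i\<in>block owner nu. \<Sum>j\<in>block owner nu. v i * Q nu i j * v j) > 0"
    and Xs_sub: "\<And>nu. Xs nu \<subseteq> {v. \<forall>i. owner i \<noteq> nu \<longrightarrow> v i = 0}"
    and Xs_ne: "\<And>nu. Xs nu \<noteq> {}"
    and X_convex: "convex (prod_set owner Xs)"
    and X_compact: "compact (prod_set owner Xs)"
    and a_nonneg: "\<And>i. a $ i \<ge> 0"
    and Qy_diag: "\<And>i j. i \<noteq> j \<Longrightarrow> Qy $ i $ j = 0"
    and Qy_pos: "\<And>i. Qy $ i $ i > 0"
    and b_diff: "\<And>x. b differentiable (at x)"
    and l_diff: "\<And>x. l differentiable (at x)"
    and b_convex: "\<And>i. convex_on (prod_set owner Xs) (\<lambda>x. b x $ i)"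
    and l_convex: "\<And>i. convex_on (prod_set owner Xs) (\<lambda>x. l x $ i)"
  shows "(\<exists>x. is_nash_eq owner Xs (nep_obj owner Q c a Qy b l) x) \<and>
         (\<exists>x. is_nash_eq owner Xs (mlfg_obj owner Q c a Qy b l) x)"
  proof -
  let ?X = "prod_set owner Xs"
  define phi where "phi = (\<lambda>x. \<Sum>i\<in>UNIV. a $ i * max (b x $ i / Qy $ i $ i) (l x $ i))"
  have phi_eq: "(\<Sum>i\<in>UNIV. a $ i * max ((matrix_inv Qy *v b x) $ i) (l x $ i)) = phi x" for x
    by (simp add: phi_def diag_inv[OF Qy_diag Qy_pos])
  have nep: "nep_obj owner Q c a Qy b l nu x = leader_quad owner Q c nu x + phi x" for nu x
    by (simp add: nep_obj_def phi_eq)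
  have mlfg: "mlfg_obj owner Q c a Qy b l nu x = leader_quad owner Q c nu x + phi x" for nu x
    by (simp add: mlfg_obj_def follower_resp_eq[OF Qy_diag Qy_pos] phi_def inner_vec_def)
  have mlfg_nep: "mlfg_obj owner Q c a Qy b l = nep_obj owner Q c a Qy b l"
    by (intro ext) (simp add: nep mlfg)
  define P where "P = (\<lambda>x. (\<Sum>nu\<in>UNIV. leader_quad owner Q c nu x) + phi x)"
  have lq_other: "leader_quad owner Q c mu (replace_block owner nu z x) = leader_quad owner Q c mu x"
    if "mu \<noteq> nu" for mu nu z x
    using that by (simp add: leader_quad_def block_def replace_block_def)
  have Pdiff: "P (replace_block owner nu z x) - P x =
     nep_obj owner Q c a Qy b l nu (replace_block owner nu z x) - nep_obj owner Q c a Qy b l nu x" for nu z x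
  proof -
    have "(\<Sum>mu\<in>UNIV. leader_quad owner Q c mu y) =
          leader_quad owner Q c nu y + (\<Sum>mu\<in>UNIV - {nu}. leader_quad owner Q c mu y)" for y
      by (simp add: sum.remove)
    moreover have "(\<Sum>mu\<in>UNIV - {nu}. leader_quad owner Q c mu (replace_block owner nu z x)) =
          (\<Sum>mu\<in>UNIV - {nu}. leader_quad owner Q c mu x)"
      by (rule sum.cong) (auto simp: lq_other)
    ultimately show ?thesis by (simp add: P_def nep)
  qed
  define z0 where "z0 = (\<lambda>nu. SOME z. z \<in> Xs nu)"
  have z0: "z0 nu \<in> Xs nu" for nu
    unfolding z0_def using Xs_ne[of nu] by (simp add: some_in_eq)
  define x0 :: "real^'n" where "x0 = (\<chi> i. z0 (owner i) i)"
  have "blockvec owner nu x0 = z0 nu" for nu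
  proof
    fix i
    show "blockvec owner nu x0 i = z0 nu i"
      using Xs_sub[of nu] z0[of nu] by (auto simp: blockvec_def x0_def)
  qed
  then have x0X: "x0 \<in> ?X" by (simp add: prod_set_def z0)
  have repl: "replace_block owner nu z x \<in> ?X" if "z \<in> Xs nu" "x \<in> ?X" for nu z x
  proof -
    have "blockvec owner mu (replace_block owner nu z x) \<in> Xs mu" for mu
    proof (cases "mu = nu")
      case True
      have "blockvec owner mu (replace_block owner nu z x) = z"
      proof
        fix i
        show "blockvec owner mu (replace_block owner nu z x) i = z i"
          using True Xs_sub[of nu] that(1) by (auto simp: blockvec_def replace_block_def)
      qed
      then show ?thesis using True that(1) by simp
    next
      case False
      have "blockvec owner mu (replace_block owner nu z x) = blockvec owner mu x"
        using False by (auto simp: blockvec_def replace_block_def)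
      then show ?thesis using that(2) by (simp add: prod_set_def)
    qed
    then show ?thesis by (simp add: prod_set_def)
  qed
  have bc: "continuous_on UNIV b" using b_diff
    by (simp add: continuous_at_imp_continuous_on differentiable_imp_continuous_within)
  have lc: "continuous_on UNIV l" using l_diff
    by (simp add: continuous_at_imp_continuous_on differentiable_imp_continuous_within)
  have "continuous_on UNIV phi"
    unfolding phi_def by (intro continuous_intros bc lc) (use Qy_pos in \<open>auto simp: less_imp_neq[symmetric]\<close>)
  then have Pc: "continuous_on ?X P"
    unfolding P_def leader_quad_def by (intro continuous_intros) (auto intro: continuous_on_subset)
  obtain xs where xs: "xs \<in> ?X" "\<And>y. y \<in> ?X \<Longrightarrow> P xs \<le> P y"
    using continuous_attains_inf[OF X_compact _ Pc] x0X by blast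
  have "is_nash_eq owner Xs (nep_obj owner Q c a Qy b l) xs"
    unfolding is_nash_eq_def
  proof (intro conjI ballI allI)
    show "xs \<in> ?X" by (rule xs)
  next
    fix nu z assume "z \<in> Xs nu"
    then have "P xs \<le> P (replace_block owner nu z xs)" using xs repl by blast
    then show "nep_obj owner Q c a Qy b l nu xs \<le> nep_obj owner Q c a Qy b l nu (replace_block owner nu z xs)"
      using Pdiff[of nu z xs] by linarith
  qed
  then show ?thesis using mlfg_nep by auto
qed

end
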